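(* Let $\varepsilon,K>0$ be constants with $\varepsilon<1/6$. Let $n$ be sufficiently large in terms of $\varepsilon,K$ and let $G$ be an $n$-vertex graph with $\Delta(G)\leq Kn^{1/3+\varepsilon}$. Suppose $G$ has $q$ copies of $C_4$ and every edge lies in at most $\frac{96\log n}{n^{4/3+\varepsilon}}q$ copies of $C_4$. Then there exist $v\in V(G)$, a positive real $s$ and a symmetric set $\mathcal{D}\subset V(G)^3$ with $|\mathcal{D}|\geq \frac{q}{n\log n}$ such that: (1) for each $(x,y,z)\in\mathcal{D}$, the vertices $v,x,y,z$ are distinct and $vx,xy,yz,zv\in E(G)$; (2) for each $(x,y,z)\in\mathcal{D}$, $d(v,y)\leq s$ and $d(x,z)\leq s$; (3) for every $x\in V(G)$, there are at most $\frac{384(\log n)q}{n^{4/3+\varepsilon}s}$ vertices $y\in V(G)$ for which some $z\in V(G)$ satisfies $(x,y,z)\in\mathcal{D}$.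
   Context: A set $\mathcal{D}$ of triples is symmetric if $(x,y,z)\in\mathcal{D}$ implies $(z,y,x)\in\mathcal{D}$. $d(u,w)$ is the codegree (number of common neighbours) of $u,w$. A copy of $C_4$ is a subgraph isomorphic to the $4$-cycle; $\log$ is the natural logarithm. *)

theory Defs
  imports Complex_Main
begin

definition simple_graph :: "'a set \<Rightarrow> ('a \<Rightarrow> 'a \<Rightarrow> bool) \<Rightarrow> bool" where
  "simple_graph V E \<longleftrightarrow> finite V \<and> (\<forall>x y. E x y \<longrightarrow> x \<in> V \<and> y \<in> V)
     \<and> (\<forall>x y. E x y \<longrightarrow> E y x) \<and> (\<forall>x. \<not> E x x)"

definition degree :: "'a set \<Rightarrow> ('a \<Rightarrow> 'a \<Rightarrow> bool) \<Rightarrow> 'a \<Rightarrow> nat" where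
  "degree V E v = card {u \<in> V. E v u}"

definition codegree :: "'a set \<Rightarrow> ('a \<Rightarrow> 'a \<Rightarrow> bool) \<Rightarrow> 'a \<Rightarrow> 'a \<Rightarrow> nat" where
  "codegree V E u w = card {x \<in> V. E u x \<and> E w x}"

text \<open>Copies of C4, each represented by its set of four edges (edges = 2-element sets).\<close>
definition C4_copies :: "'a set \<Rightarrow> ('a \<Rightarrow> 'a \<Rightarrow> bool) \<Rightarrow> 'a set set set" where
  "C4_copies V E = {{{a,b},{b,c},{c,d},{d,a}} | a b c d.
      a \<in> V \<and> b \<in> V \<and> c \<in> V \<and> d \<in> V \<and> distinct [a,b,c,d]
      \<and> E a b \<and> E b c \<and> E c d \<and> E d a}"

definition symmetric_triples :: "('a \<times> 'a \<times> 'a) set \<Rightarrow> bool" where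
  "symmetric_triples D \<longleftrightarrow> (\<forall>x y z. (x,y,z) \<in> D \<longrightarrow> (z,y,x) \<in> D)"

end

theory Submission
  imports Defs
begin

definition cyc :: "'a \<Rightarrow> 'a \<Rightarrow> 'a \<Rightarrow> 'a \<Rightarrow> 'a set set" where
  "cyc a b c d = {{a,b},{b,c},{c,d},{d,a}}"

lemma cyc_rot: "cyc a b c d = cyc b c d a"
  unfolding cyc_def by (simp add: insert_commute)

lemma cyc_rev: "cyc a b c d = cyc a d c b"
  unfolding cyc_def by (simp add: insert_commute)

lemma C4_elim:
  assumes "C \<in> C4_copies V E"
  obtains a b c d where "C = cyc a b c d" "a \<in> V" "b \<in> V" "c \<in> V" "d \<in> V"
        "distinct [a,b,c,d]" "E a b" "E b c" "E c d" "E d a"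
  using assms unfolding C4_copies_def cyc_def by blast

lemma cyc_in_C4:
  assumes "a \<in> V" "b \<in> V" "c \<in> V" "d \<in> V" "distinct [a,b,c,d]"
    "E a b" "E b c" "E c d" "E d a"
  shows "cyc a b c d \<in> C4_copies V E"
  unfolding C4_copies_def cyc_def using assms by blast

lemma C4_finite: "finite V \<Longrightarrow> finite (C4_copies V E)"
proof -
  assume f: "finite V"
  have "C4_copies V E \<subseteq> (\<lambda>(a,b,c,d). cyc a b c d) ` (V\<times>V\<times>V\<times>V)"
  proof
    fix C assume "C \<in> C4_copies V E"
    then obtain a b c d where "C = cyc a b c d" "a \<in> V" "b \<in> V" "c \<in> V" "d \<in> V"
      by (rule C4_elim)
    thus "C \<in> (\<lambda>(a,b,c,d). cyc a b c d) ` (V\<times>V\<times>V\<times>V)"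
      by (intro image_eqI[of _ _ "(a,b,c,d)"]) auto
  qed
  thus ?thesis by (rule finite_subset) (use f in auto)
qed

lemma codegree_sym: "codegree V E a b = codegree V E b a"
  unfolding codegree_def by (simp add: conj_commute)

lemma card_fibres:
  assumes "finite S" "finite T" "g ` S \<subseteq> T"
  shows "card S = (\<Sum>y\<in>T. card {x\<in>S. g x = y})"
  using sum.group[OF assms, of "\<lambda>_. 1::nat"] by simp

lemma pigeon:
  fixes c :: "'a \<Rightarrow> nat"
  assumes "finite P" "P \<noteq> {}"
  shows "\<exists>p\<in>P. sum c P \<le> card P * c p"
proof (rule ccontr)
  assume "\<not> ?thesis"
  hence h: "\<And>p. p\<in>P \<Longrightarrow> card P * c p < sum c P" by auto
  have "card P * sum c P = (\<Sum>p\<in>P. card P * c p)" by (simp add: sum_distrib_left)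
  also have "\<dots> < (\<Sum>p\<in>P. sum c P)" by (rule sum_strict_mono[OF assms h])
  also have "\<dots> = card P * sum c P" by simp
  finally show False by simp
qed

lemma cyc_inj:
  assumes "distinct [v,x,y,w]" "distinct [v,x,y',w']" "cyc v x y w = cyc v x y' w'"
  shows "y = y' \<and> w = w'"
proof -
  have "{x,y} \<in> cyc v x y w" by (simp add: cyc_def)
  hence "{x,y} \<in> cyc v x y' w'" using assms(3) by simp
  hence 1: "y = y'" using assms(1,2) by (auto simp: cyc_def doubleton_eq_iff)
  have "{w,v} \<in> cyc v x y w" by (simp add: cyc_def)
  hence "{w,v} \<in> cyc v x y' w'" using assms(3) by simp
  hence "w = w'" using assms(1,2) by (auto simp: cyc_def doubleton_eq_iff)
  with 1 show ?thesis by simp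
qed

definition LC :: "'a set \<Rightarrow> ('a\<Rightarrow>'a\<Rightarrow>bool) \<Rightarrow> ('a\<times>'a\<times>'a\<times>'a) set" where
 "LC V E = {(v,x,y,z). v\<in>V \<and> x\<in>V \<and> y\<in>V \<and> z\<in>V \<and> distinct [v,x,y,z] \<and> E v x \<and> E x y \<and> E y z \<and> E z v
     \<and> codegree V E z x \<le> codegree V E v y}"

lemma LC_finite: "finite V \<Longrightarrow> finite (LC V E)"
  by (rule finite_subset[of _ "V\<times>V\<times>V\<times>V"]) (auto simp: LC_def)

lemma four_q:
  assumes G: "simple_graph V E"
  shows "4 * card (C4_copies V E) \<le> card (LC V E)"
proof -
  let ?f = "\<lambda>(v,x,y,z). cyc v x y z"
  have fin: "finite V" using G by (simp add: simple_graph_def)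
  have sym: "\<And>a b. E a b \<Longrightarrow> E b a" using G by (simp add: simple_graph_def)
  have img: "?f ` LC V E \<subseteq> C4_copies V E"
  proof clarify
    fix v x y z assume "(v,x,y,z) \<in> LC V E"
    thus "cyc v x y z \<in> C4_copies V E" unfolding LC_def by (intro cyc_in_C4) auto
  qed
  have fib: "4 \<le> card {t\<in>LC V E. ?f t = C}" if C: "C \<in> C4_copies V E" for C
  proof -
    have "\<exists>t\<in>LC V E. ?f t = C"
    proof -
      from C obtain a b c d where abcd: "C = cyc a b c d" "a \<in> V" "b \<in> V" "c \<in> V" "d \<in> V"
        "distinct [a,b,c,d]" "E a b" "E b c" "E c d" "E d a"
        by (rule C4_elim)
      show ?thesis
      proof (cases "codegree V E d b \<le> codegree V E a c")
        case True
        hence "(a,b,c,d) \<in> LC V E" using abcd by (simp add: LC_def)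
        moreover have "?f (a,b,c,d) = C" using abcd by simp
        ultimately show ?thesis by blast
      next
        case False
        hence "codegree V E a c \<le> codegree V E b d" by (simp add: codegree_sym)
        hence "(b,c,d,a) \<in> LC V E" using abcd by (auto simp: LC_def)
        moreover have "?f (b,c,d,a) = C" using abcd cyc_rot[of a b c d] by simp
        ultimately show ?thesis by blast
      qed
    qed
    then obtain v x y z where t: "(v,x,y,z) \<in> LC V E" "cyc v x y z = C" by auto
    have dist: "distinct [v,x,y,z]" using t by (simp add: LC_def)
    have e: "cyc v z y x = C" "cyc y x v z = C" "cyc y z v x = C"
      using t(2) cyc_rot cyc_rev by metis+
    have sub: "{(v,x,y,z),(v,z,y,x),(y,x,v,z),(y,z,v,x)} \<subseteq> {t\<in>LC V E. ?f t = C}"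
      using t e sym by (auto simp: LC_def codegree_sym)
    have "card {(v,x,y,z),(v,z,y,x),(y,x,v,z),(y,z,v,x)} = 4" using dist by auto
    moreover have "finite {t\<in>LC V E. ?f t = C}" using LC_finite[OF fin] by simp
    ultimately show ?thesis using card_mono[OF _ sub] by simp
  qed
  have "card (LC V E) = (\<Sum>C\<in>C4_copies V E. card {t\<in>LC V E. ?f t = C})"
    by (rule card_fibres[OF LC_finite[OF fin] C4_finite[OF fin] img])
  also have "\<dots> \<ge> (\<Sum>C\<in>C4_copies V E. 4)" by (rule sum_mono) (rule fib)
  finally show ?thesis by simp
qed

theorem lemma2p18:
  fixes \<epsilon> K :: real
  assumes "0 < \<epsilon>" "\<epsilon> < 1/6" "0 < K"
  shows "\<exists>N::nat. \<forall>n\<ge>N. \<forall>(E :: nat \<Rightarrow> nat \<Rightarrow> bool) (q :: nat).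
    simple_graph {..<n} E \<longrightarrow>
    (\<forall>v<n. real (degree {..<n} E v) \<le> K * real n powr (1/3 + \<epsilon>)) \<longrightarrow>
    q = card (C4_copies {..<n} E) \<longrightarrow>
    (\<forall>a b. E a b \<longrightarrow>
       real (card {C \<in> C4_copies {..<n} E. {a,b} \<in> C})
         \<le> 96 * ln (real n) / real n powr (4/3 + \<epsilon>) * real q) \<longrightarrow>
    (\<exists>v<n. \<exists>s::real. s > 0 \<and> (\<exists>D \<subseteq> {..<n} \<times> {..<n} \<times> {..<n}.
       symmetric_triples D \<and>
       real (card D) \<ge> real q / (real n * ln (real n)) \<and>
       (\<forall>(x,y,z) \<in> D. distinct [v,x,y,z] \<and> E v x \<and> E x y \<and> E y z \<and> E z v) \<and>
       (\<forall>(x,y,z) \<in> D. real (codegree {..<n} E v y) \<le> s \<and> real (codegree {..<n} E x z) \<le> s) \<and>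
       (\<forall>x<n. real (card {y \<in> {..<n}. \<exists>z<n. (x,y,z) \<in> D})
          \<le> 384 * ln (real n) * real q / (real n powr (4/3 + \<epsilon>) * s))))"
proof (rule exI[of _ 3], intro allI impI)
  fix n :: nat and E :: "nat \<Rightarrow> nat \<Rightarrow> bool" and q :: nat
  assume n3: "3 \<le> n" and G: "simple_graph {..<n} E"
    and deg: "\<forall>v<n. real (degree {..<n} E v) \<le> K * real n powr (1/3 + \<epsilon>)"
    and qdef: "q = card (C4_copies {..<n} E)"
    and edge: "\<forall>a b. E a b \<longrightarrow>
       real (card {C \<in> C4_copies {..<n} E. {a,b} \<in> C})
         \<le> 96 * ln (real n) / real n powr (4/3 + \<epsilon>) * real q"
  have symE: "\<And>a b. E a b \<Longrightarrow> E b a" and irr: "\<And>a. \<not> E a a"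
    using G by (auto simp: simple_graph_def)
  define cd where "cd = codegree {..<n} E"
  define kf :: "nat \<Rightarrow> nat" where "kf d = (LEAST k. d \<le> 4^k)" for d
  have kf_le: "d \<le> 4^(kf d)" for d
  proof -
    have "d < 2^d" by (rule less_exp)
    also have "(2::nat)^d \<le> 4^d" by (rule power_mono) auto
    finally have "d \<le> 4^d" by simp
    thus ?thesis unfolding kf_def by (rule LeastI)
  qed
  have kf_lt: "4^(kf d - 1) < d" if "0 < kf d" for d
  proof -
    from that have "kf d - 1 < kf d" by simp
    hence "\<not> d \<le> 4^(kf d - 1)" unfolding kf_def by (rule not_less_Least)
    thus ?thesis by simp
  qed
  have kf_mono: "kf d \<le> kf n" if "d \<le> n" for d
  proof -
    have "d \<le> 4^(kf n)" using kf_le[of n] that by linarith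
    thus ?thesis unfolding kf_def by (rule Least_le)
  qed
  have cd_le: "cd a b \<le> n" for a b
    unfolding cd_def codegree_def
    using card_mono[of "{..<n}" "{x\<in>{..<n}. E a x \<and> E b x}"] by auto
  define key where "key = (\<lambda>(v::nat,x::nat,y::nat,z::nat). (v, kf (cd v y)))"
  define P where "P = {..<n} \<times> {..kf n}"
  have finLC: "finite (LC {..<n} E)" by (rule LC_finite) simp
  have finP: "finite P" by (simp add: P_def)
  have keyP: "key ` LC {..<n} E \<subseteq> P"
    using kf_mono cd_le by (auto simp: key_def LC_def P_def)
  have sumeq: "card (LC {..<n} E) = (\<Sum>p\<in>P. card {t\<in>LC {..<n} E. key t = p})"
    by (rule card_fibres[OF finLC finP keyP])
  have "(0, 0) \<in> P" using n3 by (simp add: P_def)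
  hence "P \<noteq> {}" by auto
  then obtain p where pP: "p \<in> P"
    and pbig: "card (LC {..<n} E) \<le> card P * card {t\<in>LC {..<n} E. key t = p}"
    using pigeon[OF finP, of "\<lambda>p. card {t\<in>LC {..<n} E. key t = p}"] sumeq by auto
  obtain v0 k0 where p: "p = (v0, k0)" by (cases p)
  have v0n: "v0 < n" using pP p by (auto simp: P_def)
  define D where "D = {(x,y,z). (v0,x,y,z) \<in> LC {..<n} E \<and> kf (cd v0 y) = k0}"
  have "{t\<in>LC {..<n} E. key t = p} = (\<lambda>(x,y,z). (v0,x,y,z)) ` D"
  proof
    show "{t\<in>LC {..<n} E. key t = p} \<subseteq> (\<lambda>(x,y,z). (v0,x,y,z)) ` D"
    proof
      fix t assume "t \<in> {t\<in>LC {..<n} E. key t = p}"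
      then obtain a b c d where t: "t = (a,b,c,d)" "(a,b,c,d) \<in> LC {..<n} E" "key (a,b,c,d) = p"
        by (cases t) auto
      hence "a = v0" "kf (cd v0 c) = k0" by (auto simp: key_def p)
      hence "(b,c,d) \<in> D" using t by (simp add: D_def)
      thus "t \<in> (\<lambda>(x,y,z). (v0,x,y,z)) ` D" using t \<open>a = v0\<close> by force
    qed
    show "(\<lambda>(x,y,z). (v0,x,y,z)) ` D \<subseteq> {t\<in>LC {..<n} E. key t = p}"
      by (auto simp: D_def key_def p)
  qed
  moreover have "inj_on (\<lambda>(x,y,z). (v0::nat,x::nat,y::nat,z::nat)) D"
    by (auto simp: inj_on_def)
  ultimately have cardD: "card {t\<in>LC {..<n} E. key t = p} = card D"
    by (simp add: card_image)
  have cardP: "card P = n * (kf n + 1)" by (simp add: P_def card_cartesian_product)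
  have four: "4 * q \<le> card (LC {..<n} E)" using four_q[OF G] qdef by simp
  have nat1: "4 * q \<le> n * (kf n + 1) * card D" using four pbig cardP cardD by simp
  have ln4: "1 \<le> ln (4::real)"
  proof -
    have "exp 1 \<le> (4::real)" using exp_le by simp
    hence "ln (exp 1) \<le> ln (4::real)" by (subst ln_le_cancel_iff) auto
    thus ?thesis by simp
  qed
  have lnn: "1 \<le> ln (real n)"
  proof -
    have "exp 1 \<le> real n" using exp_le n3 by linarith
    hence "ln (exp 1) \<le> ln (real n)" using n3 by (subst ln_le_cancel_iff) auto
    thus ?thesis by simp
  qed
  have kfpos: "0 < kf n"
  proof (rule ccontr)
    assume "\<not> 0 < kf n"
    hence "kf n = 0" by simp
    hence "n \<le> 1" using kf_le[of n] by simp
    thus False using n3 by simp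
  qed
  have "4^(kf n - 1) < n" by (rule kf_lt[OF kfpos])
  hence "real (4^(kf n - 1)) < real n" by linarith
  hence "ln (real (4^(kf n - 1))) < ln (real n)" by (subst ln_less_cancel_iff) auto
  hence "real (kf n - 1) * ln 4 < ln (real n)" by (simp add: ln_realpow)
  moreover have "real (kf n - 1) \<le> real (kf n - 1) * ln 4" using ln4 by (simp add: mult_le_cancel_left1)
  ultimately have "real (kf n - 1) < ln (real n)" by linarith
  hence Lb: "real (kf n + 1) \<le> 4 * ln (real n)" using kfpos lnn by (simp add: of_nat_diff)
  have "real (4 * q) \<le> real (n * (kf n + 1) * card D)" using nat1 by (simp only: of_nat_le_iff)
  hence real1: "4 * real q \<le> real n * real (kf n + 1) * real (card D)" by (simp add: algebra_simps)
  also have "\<dots> \<le> real n * (4 * ln (real n)) * real (card D)"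
    by (intro mult_right_mono mult_left_mono Lb) auto
  finally have "real q \<le> real (card D) * (real n * ln (real n))" by (simp add: algebra_simps)
  moreover have "0 < real n * ln (real n)" using n3 lnn by simp
  ultimately have Dbig: "real q / (real n * ln (real n)) \<le> real (card D)"
    by (simp add: pos_divide_le_eq)
  have c3: "real (card {y \<in> {..<n}. \<exists>z<n. (x,y,z) \<in> D})
          \<le> 384 * ln (real n) * real q / (real n powr (4/3 + \<epsilon>) * 4^k0)" if xn: "x < n" for x
  proof (cases "{y \<in> {..<n}. \<exists>z<n. (x,y,z) \<in> D} = {}")
    case True
    have "0 \<le> 384 * ln (real n) * real q / (real n powr (4/3 + \<epsilon>) * 4^k0)"
      using lnn by simp
    then show ?thesis unfolding True by simp
  next
    case False
    define Y where "Y = {y \<in> {..<n}. \<exists>z<n. (x,y,z) \<in> D}"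
    obtain y1 z1 where "(x,y1,z1) \<in> D" using False by auto
    hence t1: "(v0,x,y1,z1) \<in> LC {..<n} E" "kf (cd v0 y1) = k0" by (auto simp: D_def)
    hence vx: "E v0 x" "v0 \<noteq> x" by (auto simp: LC_def)
    have "{x,z1} \<subseteq> {w\<in>{..<n}. E v0 w \<and> E y1 w}" using t1 symE by (auto simp: LC_def)
    moreover have "card {x,z1} = 2" using t1 by (auto simp: LC_def)
    moreover have "finite {w\<in>{..<n}. E v0 w \<and> E y1 w}" by simp
    ultimately have "card {x,z1} \<le> card {w\<in>{..<n}. E v0 w \<and> E y1 w}"
      using card_mono by blast
    hence cd2: "2 \<le> cd v0 y1" using \<open>card {x,z1} = 2\<close> by (simp add: cd_def codegree_def)
    have "k0 \<noteq> 0"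
    proof
      assume "k0 = 0"
      hence "cd v0 y1 \<le> 1" using kf_le[of "cd v0 y1"] t1(2) by simp
      thus False using cd2 by simp
    qed
    then obtain j where j: "k0 = Suc j" by (cases k0) auto
    define Z where "Z y = {w\<in>{..<n}. E v0 w \<and> E y w \<and> w \<noteq> x}" for y
    have Zc: "4^j \<le> card (Z y)" if "y \<in> Y" for y
    proof -
      from that obtain z where "(x,y,z) \<in> D" by (auto simp: Y_def)
      hence t: "(v0,x,y,z) \<in> LC {..<n} E" "kf (cd v0 y) = k0" by (auto simp: D_def)
      have lt: "4^j < cd v0 y" using kf_lt[of "cd v0 y"] t(2) j by simp
      have "Z y = {w\<in>{..<n}. E v0 w \<and> E y w} - {x}" by (auto simp: Z_def)
      moreover have "x \<in> {w\<in>{..<n}. E v0 w \<and> E y w}" using t symE by (auto simp: LC_def)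
      ultimately have "card (Z y) = cd v0 y - 1"
        by (simp add: cd_def codegree_def card_Diff_singleton)
      with lt show ?thesis by simp
    qed
    have mem: "y < n \<and> w < n \<and> distinct [v0,x,y,w] \<and> E x y \<and> E y w \<and> E w v0"
      if "y \<in> Y" "w \<in> Z y" for y w
    proof -
      from that(1) obtain z where "(x,y,z) \<in> D" by (auto simp: Y_def)
      hence t: "(v0,x,y,z) \<in> LC {..<n} E" by (auto simp: D_def)
      have "E v0 w" "E y w" "w \<noteq> x" "w < n" using that(2) by (auto simp: Z_def)
      moreover have "w \<noteq> v0" "w \<noteq> y" using \<open>E v0 w\<close> \<open>E y w\<close> irr by auto
      ultimately show ?thesis using t symE by (auto simp: LC_def)
    qed
    define S where "S = {C \<in> C4_copies {..<n} E. {v0,x} \<in> C}"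
    have finS: "finite S" using C4_finite[of "{..<n}" E] by (simp add: S_def)
    have inj: "inj_on (\<lambda>(y,w). cyc v0 x y w) (Sigma Y Z)"
    proof (rule inj_onI, clarify)
      fix y w y' w' assume a: "y \<in> Y" "w \<in> Z y" "y' \<in> Y" "w' \<in> Z y'"
        "cyc v0 x y w = cyc v0 x y' w'"
      show "y = y' \<and> w = w'" using cyc_inj[OF _ _ a(5)] mem[OF a(1,2)] mem[OF a(3,4)] by blast
    qed
    have into: "(\<lambda>(y,w). cyc v0 x y w) ` Sigma Y Z \<subseteq> S"
    proof clarify
      fix y w assume a: "y \<in> Y" "w \<in> Z y"
      have "cyc v0 x y w \<in> C4_copies {..<n} E"
        using mem[OF a] vx v0n xn by (intro cyc_in_C4) auto
      moreover have "{v0,x} \<in> cyc v0 x y w" by (simp add: cyc_def)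
      ultimately show "cyc v0 x y w \<in> S" by (simp add: S_def)
    qed
    have finY: "finite Y" by (simp add: Y_def)
    have "card (Sigma Y Z) \<le> card S" by (rule card_inj_on_le[OF inj into finS])
    moreover have "card (Sigma Y Z) = (\<Sum>y\<in>Y. card (Z y))"
      by (rule card_SigmaI[OF finY]) (simp add: Z_def)
    moreover have "card Y * 4^j \<le> (\<Sum>y\<in>Y. card (Z y))"
      using sum_bounded_below[of Y "4^j" "\<lambda>y. card (Z y)"] Zc by simp
    ultimately have "card Y * 4^j \<le> card S" by linarith
    hence "real (card Y * 4^j) \<le> real (card S)" by (simp only: of_nat_le_iff)
    hence "real (card Y) * 4^j \<le> real (card S)" by simp
    also have "\<dots> \<le> 96 * ln (real n) / real n powr (4/3 + \<epsilon>) * real q"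
      using edge vx(1) by (simp add: S_def)
    finally have h: "real (card Y) * 4^j \<le> 96 * ln (real n) / real n powr (4/3 + \<epsilon>) * real q" .
    have "real (card Y) \<le> (96 * ln (real n) / real n powr (4/3 + \<epsilon>) * real q) / 4^j"
      by (subst pos_le_divide_eq) (use h in auto)
    also have "\<dots> = 384 * ln (real n) * real q / (real n powr (4/3 + \<epsilon>) * 4^k0)"
      using n3 by (simp add: j field_simps)
    finally show ?thesis by (simp add: Y_def)
  qed
  show "\<exists>v<n. \<exists>s::real. s > 0 \<and> (\<exists>D \<subseteq> {..<n} \<times> {..<n} \<times> {..<n}.
       symmetric_triples D \<and>
       real (card D) \<ge> real q / (real n * ln (real n)) \<and>
       (\<forall>(x,y,z) \<in> D. distinct [v,x,y,z] \<and> E v x \<and> E x y \<and> E y z \<and> E z v) \<and>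
       (\<forall>(x,y,z) \<in> D. real (codegree {..<n} E v y) \<le> s \<and> real (codegree {..<n} E x z) \<le> s) \<and>
       (\<forall>x<n. real (card {y \<in> {..<n}. \<exists>z<n. (x,y,z) \<in> D})
          \<le> 384 * ln (real n) * real q / (real n powr (4/3 + \<epsilon>) * s)))"
    apply (intro exI[of _ v0] conjI v0n exI[of _ "4^k0"] exI[of _ D])
    subgoal by simp
    subgoal by (auto simp: D_def LC_def)
    subgoal unfolding symmetric_triples_def D_def using symE by (auto simp: LC_def codegree_sym)
    subgoal by (rule Dbig)
    subgoal by (auto simp: D_def LC_def)
    subgoal
    proof clarify
      fix x y z assume "(x,y,z) \<in> D"
      hence t: "(v0,x,y,z) \<in> LC {..<n} E" "kf (cd v0 y) = k0" by (auto simp: D_def)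
      have a: "cd v0 y \<le> 4^k0" using kf_le[of "cd v0 y"] t(2) by simp
      have b: "cd x z \<le> cd v0 y" using t(1) by (auto simp: LC_def cd_def codegree_sym)
      have "real (cd v0 y) \<le> real (4^k0)" using a by (simp only: of_nat_le_iff)
      hence "real (cd v0 y) \<le> 4^k0" by simp
      moreover have "real (cd x z) \<le> real (cd v0 y)" using b by simp
      ultimately show "real (codegree {..<n} E v0 y) \<le> 4^k0 \<and> real (codegree {..<n} E x z) \<le> 4^k0"
        by (simp add: cd_def)
    qed
    subgoal using c3 by blast
    done
qed

end
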